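(* Let $Q$ be a convex polytope in $\mathbb{R}^D$ with vertices in $\mathbb{Z}^D$, let $E$ be an edge of $Q$, and let $A\subset L(Q)$. Suppose $A\cap E = T_E(S)$, where $S\subset\mathbb{Z}$ and $T_E:\mathbb{R}\to\mathbb{R}^D$ is an injective affine transformation. Then there exists an injective affine transformation $T_{E+E}:\mathbb{R}\to\mathbb{R}^D$ such that $$(A+A)\cap (E+E) = T_{E+E}(S+S).$$
   Context: $L(Q) = Q\cap\mathbb{Z}^D$. For sets $X,Y$, $X+Y=\{x+y: x\in X,y\in Y\}$ (Minkowski sum). *)

theory Defs
  imports "HOL-Analysis.Analysis"
begin

definition minkowski_sum :: "'a::plus set \<Rightarrow> 'a set \<Rightarrow> 'a set" where
  "minkowski_sum X Y = {x + y | x y. x \<in> X \<and> y \<in> Y}"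

definition lattice_pts :: "(real ^ 'n) set \<Rightarrow> (real ^ 'n) set" where
  "lattice_pts Q = {x \<in> Q. \<forall>i. x $ i \<in> \<int>}"

definition affine_map :: "('a::real_vector \<Rightarrow> 'b::real_vector) \<Rightarrow> bool" where
  "affine_map f \<longleftrightarrow> linear (\<lambda>x. f x - f 0)"

text \<open>Edges: library notion edge_of (face of affine dimension 1).\<close>

end

theory Submission
  imports Defs
begin

lemma face_sum_lemma:
  fixes E Q :: "'a::euclidean_space set"
  assumes F: "E face_of Q" and x: "x \<in> Q" and y: "y \<in> Q"
    and e1: "e1 \<in> E" and e2: "e2 \<in> E" and eq: "x + y = e1 + e2"
  shows "x \<in> E \<and> y \<in> E"
proof -
  have cv: "convex E" using F face_of_imp_convex by blast
  have m: "midpoint e1 e2 \<in> E"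
    using convexD[OF cv e1 e2, of "1/2" "1/2"] by (simp add: midpoint_def scaleR_add_right)
  have mm: "midpoint x y = midpoint e1 e2" by (simp add: midpoint_def eq)
  show ?thesis
  proof (cases "x = y")
    case True
    then have "midpoint x y = x" by (simp add: midpoint_def scaleR_2[symmetric] del: scaleR_2)
    then show ?thesis using m mm True by simp
  next
    case False
    then have "midpoint x y \<in> open_segment x y" by simp
    then show ?thesis using face_ofD[OF F _ x y] m mm by simp
  qed
qed

theorem lemma4:
  fixes Q E A :: "(real ^ 'n) set" and S :: "real set" and T :: "real \<Rightarrow> real ^ 'n"
  assumes "polytope Q"
    and "\<forall>v. v extreme_point_of Q \<longrightarrow> (\<forall>i. v $ i \<in> \<int>)"
    and "E edge_of Q"
    and "A \<subseteq> lattice_pts Q"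
    and "S \<subseteq> \<int>"
    and "affine_map T" and "inj T"
    and "A \<inter> E = T ` S"
  shows "\<exists>T2 :: real \<Rightarrow> real ^ 'n. affine_map T2 \<and> inj T2 \<and>
           minkowski_sum A A \<inter> minkowski_sum E E = T2 ` minkowski_sum S S"
proof -
  have F: "E face_of Q" using assms(3) by (simp add: edge_of_def)
  have AQ: "A \<subseteq> Q" using assms(4) by (auto simp: lattice_pts_def)
  have lin: "linear (\<lambda>x. T x - T 0)" using assms(6) by (simp add: affine_map_def)
  define T2 where "T2 = (\<lambda>z. T z + T 0)"
  have add: "T a + T b = T2 (a + b)" for a b
  proof -
    have "T (a+b) - T 0 = (T a - T 0) + (T b - T 0)"
      using linear_add[OF lin] by simp
    then show ?thesis unfolding T2_def by (simp add: algebra_simps)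
  qed
  have aff: "affine_map T2" using lin by (simp add: affine_map_def T2_def)
  have inj2: "inj T2" using assms(7) by (auto simp: inj_def T2_def)
  have "minkowski_sum A A \<inter> minkowski_sum E E = minkowski_sum (A \<inter> E) (A \<inter> E)"
  proof
    show "minkowski_sum A A \<inter> minkowski_sum E E \<subseteq> minkowski_sum (A \<inter> E) (A \<inter> E)"
    proof
      fix z assume "z \<in> minkowski_sum A A \<inter> minkowski_sum E E"
      then obtain x y e1 e2 where "z = x + y" "x \<in> A" "y \<in> A" "z = e1 + e2" "e1 \<in> E" "e2 \<in> E"
        unfolding minkowski_sum_def by blast
      moreover have "x \<in> E \<and> y \<in> E"
        using face_sum_lemma[OF F, of x y e1 e2] calculation AQ by auto
      ultimately show "z \<in> minkowski_sum (A \<inter> E) (A \<inter> E)"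
        by (auto simp: minkowski_sum_def)
    qed
  next
    show "minkowski_sum (A \<inter> E) (A \<inter> E) \<subseteq> minkowski_sum A A \<inter> minkowski_sum E E"
      by (auto simp: minkowski_sum_def)
  qed
  also have "\<dots> = T2 ` minkowski_sum S S"
  proof
    show "minkowski_sum (A \<inter> E) (A \<inter> E) \<subseteq> T2 ` minkowski_sum S S"
    proof
      fix z assume "z \<in> minkowski_sum (A \<inter> E) (A \<inter> E)"
      then obtain a b where "z = T a + T b" "a \<in> S" "b \<in> S"
        unfolding assms(8) minkowski_sum_def by blast
      then show "z \<in> T2 ` minkowski_sum S S"
        unfolding minkowski_sum_def add by blast
    qed
  next
    show "T2 ` minkowski_sum S S \<subseteq> minkowski_sum (A \<inter> E) (A \<inter> E)"
    proof
      fix z assume "z \<in> T2 ` minkowski_sum S S"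
      then obtain a b where "z = T2 (a + b)" "a \<in> S" "b \<in> S"
        unfolding minkowski_sum_def by blast
      then have "z = T a + T b" "T a \<in> A \<inter> E" "T b \<in> A \<inter> E"
        using add assms(8) by auto
      then show "z \<in> minkowski_sum (A \<inter> E) (A \<inter> E)"
        unfolding minkowski_sum_def by blast
    qed
  qed
  finally show ?thesis using aff inj2 by blast
qed

end
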